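(* Let $\phi\in\,]0,\pi[$, $M\in\mathbb{R}$, $N>0$, let $\Sigma$ be the Keplerian branch around ${\rm O}$ in the plane ${\rm O}xy$ with equation $r=My+N$, and let $g$ be the affine map $(x_1,y_1)\mapsto(x_3,y_3)$ defined by $x_1=x_3-M\frac{\cos\phi}{\sin\phi}y_3-N\cos\phi$, $y_1=\frac{1}{\sin\phi}y_3$. Let $\Gamma$ be a Keplerian arc carried by $\Sigma$ whose endpoints ${\rm A}$ and ${\rm B}$ have the same ordinate $y_{\rm A}=y_{\rm B}$. Then the elapsed time $\Delta t=t_{\rm B}-t_{\rm A}$ of the image arc $g(\Gamma)$ equals that of $\Gamma$.
   Context: In the Euclidean plane ${\rm O}xy$, $r=\sqrt{x^2+y^2}$, Newton's system $\ddot q=-q/r^3$, energy $H=\frac12\|\dot q\|^2-\frac1r$. A Keplerian arc is the class, modulo time shifts, of a solution (extended through collisions by bouncing back along the same ray with the same energy) restricted to $[t_{\rm A},t_{\rm B}]$, $t_{\rm B}>t_{\rm A}$, with ends ${\rm A}=q(t_{\rm A})$, ${\rm B}=q(t_{\rm B})$ and elapsed time $\Delta t=t_{\rm B}-t_{\rm A}$. The image $g(\Sigma)$ is the Keplerian branch $r=x\cos\phi+yM\sin\phi+N\sin^2\phi$. The image arc $g(\Gamma)$ is the Keplerian arc on $g(\Sigma)$ obtained by mapping $\Gamma$ as an unparametrized oriented curve (including its number of turns around ${\rm O}$), traversed in the direction induced by $g$ from $g({\rm A})$ to $g({\rm B})$, with time parametrization given by Newton's system. *)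

theory Defs
  imports "HOL-Analysis.Analysis"
begin

text \<open>The Euclidean plane Oxy is encoded as the complex numbers: x = Re, y = Im,
  r = norm (= sqrt (x^2+y^2)).  Newton's system reads q'' = - q / r^3.\<close>

definition kepler_motion :: "(real \<Rightarrow> complex) \<Rightarrow> real \<Rightarrow> real \<Rightarrow> bool" where
  "kepler_motion q a b \<longleftrightarrow> a < b \<and>
     (\<exists>v. \<forall>t\<in>{a..b}. q t \<noteq> 0 \<and>
        (q has_vector_derivative v t) (at t within {a..b}) \<and>
        (v has_vector_derivative (- (q t / of_real ((norm (q t)) ^ 3)))) (at t within {a..b}))"

definition on_branch :: "real \<Rightarrow> real \<Rightarrow> complex \<Rightarrow> bool" where
  "on_branch M N p \<longleftrightarrow> norm p = M * Im p + N"

text \<open>The affine map g : (x1,y1) \<mapsto> (x3,y3) defined by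
  x1 = x3 - M (cos phi / sin phi) y3 - N cos phi,  y1 = y3 / sin phi,
  i.e. (solved for (x3,y3)) y3 = sin phi * y1, x3 = x1 + M cos phi y1 + N cos phi.\<close>
definition kepler_g :: "real \<Rightarrow> real \<Rightarrow> real \<Rightarrow> complex \<Rightarrow> complex" where
  "kepler_g phi M N p =
     Complex (Re p + M * cos phi * Im p + N * cos phi) (sin phi * Im p)"

text \<open>q3 on [sA,sB] traverses the image under g of the arc q1 on [tA,tB], as an
  oriented unparametrized curve: q3 = g o q1 o sigma with sigma an increasing
  homeomorphism of [sA,sB] onto [tA,tB].\<close>
definition is_image_arc ::
  "(complex \<Rightarrow> complex) \<Rightarrow> (real \<Rightarrow> complex) \<Rightarrow> real \<Rightarrow> real \<Rightarrow>
   (real \<Rightarrow> complex) \<Rightarrow> real \<Rightarrow> real \<Rightarrow> bool" where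
  "is_image_arc g q1 tA tB q3 sA sB \<longleftrightarrow>
     (\<exists>\<sigma>. continuous_on {sA..sB} \<sigma> \<and> strict_mono_on {sA..sB} \<sigma> \<and>
          \<sigma> ` {sA..sB} = {tA..tB} \<and>
          (\<forall>s\<in>{sA..sB}. q3 s = g (q1 (\<sigma> s))))"

end

theory Submission
  imports Defs
begin

lemma deriv_zero_on:
  fixes f :: "real \<Rightarrow> real"
  assumes "a < b" "t \<in> {a..b}" "(f has_real_derivative D) (at t within {a..b})"
    "\<forall>s\<in>{a..b}. f s = 0"
  shows "D = 0"
proof -
  have "((\<lambda>s. 0::real) has_real_derivative D) (at t within {a..b})"
    by (rule has_field_derivative_transform_within[OF assms(3), of 1]) (use assms in auto)
  moreover have "((\<lambda>s. 0::real) has_real_derivative 0) (at t within {a..b})" by simp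
  ultimately show ?thesis
    using vector_derivative_unique_within_closed_interval[of a b t "\<lambda>s. 0::real" D 0] assms(1,2)
    by (simp add: has_real_derivative_iff_has_vector_derivative)
qed

lemma comps:
  fixes q v :: "real \<Rightarrow> complex"
  assumes "q t \<noteq> 0" "(q has_vector_derivative v t) (at t within S)"
    "(v has_vector_derivative (- (q t / of_real ((norm (q t)) ^ 3)))) (at t within S)"
  shows "((\<lambda>t. Re (q t)) has_real_derivative Re (v t)) (at t within S)"
    "((\<lambda>t. Im (q t)) has_real_derivative Im (v t)) (at t within S)"
    "((\<lambda>t. Re (v t)) has_real_derivative - Re (q t) / norm (q t) ^ 3) (at t within S)"
    "((\<lambda>t. Im (v t)) has_real_derivative - Im (q t) / norm (q t) ^ 3) (at t within S)"
    "((\<lambda>t. norm (q t)) has_real_derivative (Re (q t) * Re (v t) + Im (q t) * Im (v t)) / norm (q t)) (at t within S)"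
proof -
  show 1: "((\<lambda>t. Re (q t)) has_real_derivative Re (v t)) (at t within S)"
    using assms by (auto intro: derivative_intros)
  show 2: "((\<lambda>t. Im (q t)) has_real_derivative Im (v t)) (at t within S)"
    using assms by (auto intro: derivative_intros)
  show "((\<lambda>t. Re (v t)) has_real_derivative - Re (q t) / norm (q t) ^ 3) (at t within S)"
    using has_field_derivative_Re[OF assms(3)] by (simp add: Re_divide_of_real)
  show "((\<lambda>t. Im (v t)) has_real_derivative - Im (q t) / norm (q t) ^ 3) (at t within S)"
    using has_field_derivative_Im[OF assms(3)] by (simp add: Im_divide_of_real)
  have n: "norm (q s) = sqrt ((Re (q s))^2 + (Im (q s))^2)" for s
    by (simp add: norm_complex_def)
  have pos: "0 < (Re (q t))^2 + (Im (q t))^2"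
    using assms(1) by (metis complex_eq_0 add_pos_nonneg add_nonneg_pos zero_less_power2 zero_le_power2 not_less_iff_gr_or_eq)
  have "((\<lambda>t. sqrt ((Re (q t))^2 + (Im (q t))^2)) has_real_derivative
      inverse (sqrt ((Re (q t))^2 + (Im (q t))^2)) / 2 * (2 * Re (q t) * Re (v t) + 2 * Im (q t) * Im (v t))) (at t within S)"
    apply (rule DERIV_chain2[where g="\<lambda>t. (Re (q t))^2 + (Im (q t))^2", OF DERIV_real_sqrt[OF pos]])
    using assms(2) by (auto intro!: derivative_eq_intros)
  then show "((\<lambda>t. norm (q t)) has_real_derivative (Re (q t) * Re (v t) + Im (q t) * Im (v t)) / norm (q t)) (at t within S)"
    unfolding n by (rule DERIV_cong) (simp add: divide_simps algebra_simps)
qed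

lemma kepler_C2:
  fixes q v :: "real \<Rightarrow> complex"
  assumes ab: "a < b"
    and D: "\<forall>t\<in>{a..b}. q t \<noteq> 0 \<and> (q has_vector_derivative v t) (at t within {a..b}) \<and>
        (v has_vector_derivative (- (q t / of_real ((norm (q t)) ^ 3)))) (at t within {a..b})"
    and conic: "\<forall>t\<in>{a..b}. norm (q t) = \<alpha> * Re (q t) + \<beta> * Im (q t) + p"
    and t: "t \<in> {a..b}"
  shows "(Re (q t) * Im (v t) - Im (q t) * Re (v t))^2 = p"
proof -
  note c = comps[of q _ v "{a..b}"]
  have A: "Re (q s) * Re (v s) + Im (q s) * Im (v s) = norm (q s) * (\<alpha> * Re (v s) + \<beta> * Im (v s))"
    if s: "s \<in> {a..b}" for s
  proof -
    have "((\<lambda>s. norm (q s) - \<alpha> * Re (q s) - \<beta> * Im (q s) - p) has_real_derivative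
       (Re (q s) * Re (v s) + Im (q s) * Im (v s)) / norm (q s) - \<alpha> * Re (v s) - \<beta> * Im (v s)) (at s within {a..b})"
      using c[of s] D s by (auto intro!: derivative_eq_intros)
    from deriv_zero_on[OF ab s this] conic
    have "(Re (q s) * Re (v s) + Im (q s) * Im (v s)) / norm (q s) - \<alpha> * Re (v s) - \<beta> * Im (v s) = 0"
      by auto
    moreover have "norm (q s) > 0" using D s by auto
    ultimately show ?thesis by (simp add: field_simps)
  qed
  define X where "X = Re (q t)"
  define Y where "Y = Im (q t)"
  define U where "U = Re (v t)"
  define W where "W = Im (v t)"
  define R where "R = norm (q t)"
  define E where "E = \<alpha> * U + \<beta> * W"
  have Rpos: "R > 0" using D t by (auto simp: R_def)
  have R2: "R^2 = X^2 + Y^2" unfolding R_def X_def Y_def by (simp add: cmod_power2)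
  have A': "X * U + Y * W = R * E" using A[OF t] by (simp add: X_def Y_def U_def W_def R_def E_def)
  have cn: "\<alpha> * X + \<beta> * Y = R - p" using conic t by (auto simp: X_def Y_def R_def)
  have "((\<lambda>s. Re (q s) * Re (v s) + Im (q s) * Im (v s) - norm (q s) * (\<alpha> * Re (v s) + \<beta> * Im (v s)))
     has_real_derivative
      (U * U + X * (- X / R^3) + (W * W + Y * (- Y / R^3)) -
       ((X * U + Y * W) / R * E + R * (\<alpha> * (- X / R^3) + \<beta> * (- Y / R^3))))) (at t within {a..b})"
    using c[of t] D t unfolding X_def Y_def U_def W_def R_def E_def
    by (auto intro!: derivative_eq_intros simp: mult.commute)
  from deriv_zero_on[OF ab t this] A
  have D0: "U * U + X * (- X / R^3) + (W * W + Y * (- Y / R^3)) -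
       ((X * U + Y * W) / R * E + R * (\<alpha> * (- X / R^3) + \<beta> * (- Y / R^3))) = 0"
    by auto
  have "U * U + W * W - (X^2 + Y^2) / R^3 - E * E + (\<alpha> * X + \<beta> * Y) / R^2 = 0"
  proof -
    have "(X * U + Y * W) / R * E = E * E" using A' Rpos by simp
    moreover have "R * (\<alpha> * (- X / R^3) + \<beta> * (- Y / R^3)) = - (\<alpha> * X + \<beta> * Y) / R^2"
      using Rpos by (simp add: field_simps power3_eq_cube power2_eq_square)
    moreover have "X * (- X / R^3) + Y * (- Y / R^3) = - (X^2 + Y^2) / R^3"
      by (simp add: add_divide_distrib diff_divide_distrib power2_eq_square)
    ultimately show ?thesis using D0 by linarith
  qed
  hence "U * U + W * W - R^2 / R^3 - E * E + (R - p) / R^2 = 0" using R2 cn by simp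
  hence e0: "R^2 * (U * U + W * W - R^2 / R^3 - E * E + (R - p) / R^2) = 0" by simp
  have e1: "R^2 * (R^2 / R^3) = R" using Rpos by (simp add: power3_eq_cube power2_eq_square)
  have e2: "R^2 * ((R - p) / R^2) = R - p" using Rpos by simp
  have "R^2 * (U * U + W * W - R^2 / R^3 - E * E + (R - p) / R^2) =
     R^2 * (U * U + W * W) - R^2 * (R^2 / R^3) - R^2 * (E * E) + R^2 * ((R - p) / R^2)"
    by (simp add: algebra_simps)
  hence "R^2 * (U * U + W * W) - R^2 * (E * E) - p = 0"
    using e0 e1 e2 by linarith
  moreover have "R^2 * (U * U + W * W) = (X * U + Y * W)^2 + (X * W - Y * U)^2"
    unfolding R2 by (simp add: algebra_simps power2_eq_square)
  moreover have "(X * U + Y * W)^2 = R^2 * (E * E)" using A' by (simp add: power2_eq_square)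
  ultimately have "(X * W - Y * U)^2 = p" by linarith
  thus ?thesis by (simp add: X_def Y_def U_def W_def)
qed

lemma Icc_nontriv:
  fixes a b x :: real
  assumes "a < b" "x \<in> {a..b}"
  shows "at x within {a..b} \<noteq> bot"
proof -
  have "at x within cbox a b \<noteq> bot"
    using assms by (auto simp: trivial_limit_within intro!: islimpt_closure_open[where s="{a <..< b}"])
  thus ?thesis by simp
qed

lemma const_on:
  fixes f :: "real \<Rightarrow> real"
  assumes "\<forall>s\<in>{a..b}. (f has_real_derivative 0) (at s within {a..b})" "x \<in> {a..b}"
  shows "f x = f a"
proof (rule has_derivative_zero_unique_strong_interval[of "{}" a b f "f a" x])
  show "continuous_on {a..b} f"
    using assms(1) DERIV_continuous continuous_on_eq_continuous_within by blast
  show "(f has_derivative (\<lambda>h. 0)) (at x within {a..b})" if "x \<in> {a..b} - {}" for x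
  proof -
    have z: "((*) (0::real)) = (\<lambda>h. 0)" by auto
    show ?thesis using assms(1) that by (auto simp: has_field_derivative_def z)
  qed
qed (use assms in auto)

lemma mono_deriv_nonneg:
  fixes \<sigma> :: "real \<Rightarrow> real"
  assumes "a < b" "s0 \<in> {a..b}" "strict_mono_on {a..b} \<sigma>"
    "(\<sigma> has_real_derivative D) (at s0 within {a..b})"
  shows "0 \<le> D"
proof (rule tendsto_lowerbound)
  show "((\<lambda>y. (\<sigma> y - \<sigma> s0) / (y - s0)) \<longlongrightarrow> D) (at s0 within {a..b})"
    using assms(4) by (simp add: has_field_derivative_iff)
  show "\<not> trivial_limit (at s0 within {a..b})" using Icc_nontriv[OF assms(1,2)] by simp
  show "\<forall>\<^sub>F y in at s0 within {a..b}. 0 \<le> (\<sigma> y - \<sigma> s0) / (y - s0)"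
    unfolding eventually_at_filter
  proof (rule always_eventually, intro allI impI)
    fix y assume y: "y \<noteq> s0" "y \<in> {a..b}"
    show "0 \<le> (\<sigma> y - \<sigma> s0) / (y - s0)"
    proof (cases "y < s0")
      case True
      then have "\<sigma> y < \<sigma> s0" using assms(3) y assms(2) by (auto simp: strict_mono_on_def)
      then show ?thesis using True by (simp add: divide_nonpos_neg)
    next
      case False
      then have "s0 < y" using y by auto
      then have "\<sigma> s0 < \<sigma> y" using assms(3) y assms(2) by (auto simp: strict_mono_on_def)
      then show ?thesis using \<open>s0 < y\<close> by simp
    qed
  qed
qed

lemma aux: "(d::real) \<noteq> 0 \<Longrightarrow> e \<noteq> 0 \<Longrightarrow> (d / h) / (d / e) = e / h"
  by (simp add: field_simps)

lemma sigma_deriv: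
  fixes \<sigma> F G :: "real \<Rightarrow> real"
  assumes S: "continuous_on S \<sigma>" "strict_mono_on S \<sigma>" "\<sigma> ` S = T" "s0 \<in> S"
    and dF: "(F has_real_derivative DF) (at (\<sigma> s0) within T)" "DF \<noteq> 0"
    and dG: "(G has_real_derivative DG) (at s0 within S)"
    and GF: "\<forall>s\<in>S. G s = F (\<sigma> s)"
  shows "(\<sigma> has_real_derivative DG / DF) (at s0 within S)"
proof -
  define \<tau> where "\<tau> = \<sigma> s0"
  have inj: "\<sigma> s \<noteq> \<tau>" if "s \<in> S" "s \<noteq> s0" for s
    using S(2) S(4) that unfolding \<tau>_def strict_mono_on_def
    by (metis linorder_neq_iff order_less_irrefl)
  have LF: "((\<lambda>t. (F t - F \<tau>) / (t - \<tau>)) \<longlongrightarrow> DF) (at \<tau> within T)"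
    using dF(1) by (simp add: has_field_derivative_iff \<tau>_def)
  have LG: "((\<lambda>s. (G s - G s0) / (s - s0)) \<longlongrightarrow> DG) (at s0 within S)"
    using dG by (simp add: has_field_derivative_iff)
  have fl: "filterlim \<sigma> (at \<tau> within T) (at s0 within S)"
  proof (rule filterlim_at_withinI)
    show "filterlim \<sigma> (nhds \<tau>) (at s0 within S)"
      using S(1) S(4) unfolding \<tau>_def continuous_on_def by blast
    show "\<forall>\<^sub>F x in at s0 within S. \<sigma> x \<in> T - {\<tau>}"
      unfolding eventually_at_filter
      by (rule always_eventually) (use inj S(3) in auto)
  qed
  have LF2: "((\<lambda>s. (F (\<sigma> s) - F \<tau>) / (\<sigma> s - \<tau>)) \<longlongrightarrow> DF) (at s0 within S)"
    using filterlim_compose[OF LF fl] by simp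
  have ne: "\<forall>\<^sub>F s in at s0 within S. (F (\<sigma> s) - F \<tau>) / (\<sigma> s - \<tau>) \<noteq> 0"
    using tendsto_imp_eventually_ne[OF LF2 dF(2)] .
  have L: "((\<lambda>s. ((G s - G s0) / (s - s0)) / ((F (\<sigma> s) - F \<tau>) / (\<sigma> s - \<tau>))) \<longlongrightarrow> DG / DF) (at s0 within S)"
    by (rule tendsto_divide[OF LG LF2 dF(2)])
  have ev: "\<forall>\<^sub>F s in at s0 within S. ((G s - G s0) / (s - s0)) / ((F (\<sigma> s) - F \<tau>) / (\<sigma> s - \<tau>))
       = (\<sigma> s - \<sigma> s0) / (s - s0)"
  proof -
    have "\<forall>\<^sub>F s in at s0 within S. s \<in> S \<and> s \<noteq> s0"
      unfolding eventually_at_filter by (rule always_eventually) auto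
    then show ?thesis using ne
    proof (eventually_elim)
      case (elim s)
      then have s: "s \<in> S" "s \<noteq> s0" and nz: "(F (\<sigma> s) - F \<tau>) / (\<sigma> s - \<tau>) \<noteq> 0" by auto
      have "\<sigma> s - \<tau> \<noteq> 0" using inj[OF s] by simp
      moreover have "F (\<sigma> s) - F \<tau> \<noteq> 0" using nz by auto
      moreover have "G s - G s0 = F (\<sigma> s) - F \<tau>" using GF s S(4) by (simp add: \<tau>_def)
      moreover have "s - s0 \<noteq> 0" using s by simp
      ultimately show ?case unfolding \<tau>_def[symmetric] using aux by metis
    qed
  qed
  show ?thesis
    unfolding has_field_derivative_iff using tendsto_cong[OF ev] L by simp
qed

lemma kepler_A:
  fixes q v :: "real \<Rightarrow> complex"
  assumes ab: "a < b"
    and D: "\<forall>t\<in>{a..b}. q t \<noteq> 0 \<and> (q has_vector_derivative v t) (at t within {a..b}) \<and>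
        (v has_vector_derivative (- (q t / of_real ((norm (q t)) ^ 3)))) (at t within {a..b})"
    and conic: "\<forall>t\<in>{a..b}. norm (q t) = \<alpha> * Re (q t) + \<beta> * Im (q t) + p"
    and s: "s \<in> {a..b}"
  shows "Re (q s) * Re (v s) + Im (q s) * Im (v s) = norm (q s) * (\<alpha> * Re (v s) + \<beta> * Im (v s))"
proof -
  note c = comps[of q _ v "{a..b}"]
  have "((\<lambda>s. norm (q s) - \<alpha> * Re (q s) - \<beta> * Im (q s) - p) has_real_derivative
     (Re (q s) * Re (v s) + Im (q s) * Im (v s)) / norm (q s) - \<alpha> * Re (v s) - \<beta> * Im (v s)) (at s within {a..b})"
    using c[of s] D s by (auto intro!: derivative_eq_intros)
  from deriv_zero_on[OF ab s this] conic
  have "(Re (q s) * Re (v s) + Im (q s) * Im (v s)) / norm (q s) - \<alpha> * Re (v s) - \<beta> * Im (v s) = 0"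
    by auto
  moreover have "norm (q s) > 0" using D s by auto
  ultimately show ?thesis by (simp add: field_simps)
qed

lemma kepler_C_const:
  fixes q v :: "real \<Rightarrow> complex"
  assumes D: "\<forall>t\<in>{a..b}. q t \<noteq> 0 \<and> (q has_vector_derivative v t) (at t within {a..b}) \<and>
        (v has_vector_derivative (- (q t / of_real ((norm (q t)) ^ 3)))) (at t within {a..b})"
    and t: "t \<in> {a..b}"
  shows "Re (q t) * Im (v t) - Im (q t) * Re (v t) = Re (q a) * Im (v a) - Im (q a) * Re (v a)"
proof (rule const_on[OF _ t, of "\<lambda>t. Re (q t) * Im (v t) - Im (q t) * Re (v t)"])
  show "\<forall>s\<in>{a..b}. ((\<lambda>t. Re (q t) * Im (v t) - Im (q t) * Re (v t)) has_real_derivative 0) (at s within {a..b})"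
  proof
    fix s assume s: "s \<in> {a..b}"
    note c = comps[of q s v "{a..b}"]
    have "((\<lambda>t. Re (q t) * Im (v t) - Im (q t) * Re (v t)) has_real_derivative
      Re (v s) * Im (v s) + Re (q s) * (- Im (q s) / norm (q s) ^ 3) - (Im (v s) * Re (v s) + Im (q s) * (- Re (q s) / norm (q s) ^ 3))) (at s within {a..b})"
      using c D s by (auto intro!: derivative_eq_intros)
    then show "((\<lambda>t. Re (q t) * Im (v t) - Im (q t) * Re (v t)) has_real_derivative 0) (at s within {a..b})"
      by (rule DERIV_cong) (simp add: algebra_simps)
  qed
qed

lemma g_norm:
  fixes phi M N :: real and z :: complex
  assumes "norm z = M * Im z + N"
  shows "norm (kepler_g phi M N z) = cos phi * Re (kepler_g phi M N z) + M * sin phi * Im (kepler_g phi M N z) + N * (sin phi)^2"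
proof -
  define x where "x = Re z"
  define y where "y = Im z"
  define r where "r = norm z"
  obtain c s where cs: "c = cos phi" "s = sin phi" by blast
  have sc': "s^2 + c^2 = 1" using cs by simp
  have cs2: "1 - c^2 = s^2" using sc' by simp
  have r2: "r^2 = x^2 + y^2" unfolding r_def x_def y_def by (simp add: cmod_power2)
  have rx: "\<bar>x\<bar> \<le> r" unfolding r_def x_def by (rule abs_Re_le_cmod)
  have c1: "\<bar>c\<bar> \<le> 1" using cs by simp
  have ry: "r = M * y + N" using assms by (simp add: r_def y_def)
  have rhs: "cos phi * Re (kepler_g phi M N z) + M * sin phi * Im (kepler_g phi M N z) + N * (sin phi)^2
      = c * x + r"
  proof -
    have "cos phi * Re (kepler_g phi M N z) + M * sin phi * Im (kepler_g phi M N z) + N * (sin phi)^2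
       = c * (x + M * c * y + N * c) + M * s * (s * y) + N * s^2"
      by (simp add: kepler_g_def x_def y_def cs)
    also have "... = c * x + (M * y + N) * (s^2 + c^2)" by (simp add: algebra_simps power2_eq_square)
    also have "... = c * x + r" using sc' ry by simp
    finally show ?thesis .
  qed
  have nn: "0 \<le> c * x + r"
  proof -
    have "\<bar>c * x\<bar> \<le> \<bar>x\<bar>" using c1 by (simp add: abs_mult mult_left_le_one_le)
    thus ?thesis using rx by linarith
  qed
  have "norm (kepler_g phi M N z) = sqrt ((x + M * c * y + N * c)^2 + (s * y)^2)"
    by (simp add: kepler_g_def x_def y_def norm_complex_def cs)
  also have "... = c * x + r"
  proof (rule real_sqrt_unique[OF _ nn])
    have e: "x + M * c * y + N * c = x + c * r" using ry by (simp add: algebra_simps)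
    have "(x + c * r)^2 + (s * y)^2 - (c * x + r)^2 = (1 - c^2) * x^2 + s^2 * y^2 - (1 - c^2) * r^2"
      by (simp add: algebra_simps power2_eq_square)
    also have "... = s^2 * x^2 + s^2 * y^2 - s^2 * r^2" by (simp only: cs2)
    also have "... = s^2 * (x^2 + y^2 - r^2)" by (simp add: algebra_simps)
    also have "... = 0" using r2 by simp
    finally show "(c * x + r)^2 = (x + M * c * y + N * c)^2 + (s * y)^2"
      unfolding e by simp
  qed
  finally show ?thesis using rhs by simp
qed

lemma deriv_unique_Icc:
  fixes f g :: "real \<Rightarrow> real"
  assumes "a < b" "x \<in> {a..b}" "(f has_real_derivative D1) (at x within {a..b})"
    "(g has_real_derivative D2) (at x within {a..b})" "\<forall>s\<in>{a..b}. f s = g s"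
  shows "D1 = D2"
proof -
  have "(f has_real_derivative D2) (at x within {a..b})"
    by (rule has_field_derivative_transform_within[OF assms(4), of 1]) (use assms in auto)
  then show ?thesis
    using vector_derivative_unique_within_closed_interval[of a b x f D1 D2] assms
    by (simp add: has_real_derivative_iff_has_vector_derivative)
qed

theorem lemma10:
  fixes phi M N tA tB sA sB :: real and q1 q3 :: "real \<Rightarrow> complex"
  assumes "0 < phi" "phi < pi" "0 < N"
    and "kepler_motion q1 tA tB"
    and "\<forall>t\<in>{tA..tB}. on_branch M N (q1 t)"
    and "Im (q1 tA) = Im (q1 tB)"
    and "kepler_motion q3 sA sB"
    and "is_image_arc (kepler_g phi M N) q1 tA tB q3 sA sB"
  shows "sB - sA = tB - tA"
proof -
  obtain v1 where tAB: "tA < tB" and D1: "\<forall>t\<in>{tA..tB}. q1 t \<noteq> 0 \<and> (q1 has_vector_derivative v1 t) (at t within {tA..tB}) \<and>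
        (v1 has_vector_derivative (- (q1 t / of_real ((norm (q1 t)) ^ 3)))) (at t within {tA..tB})"
    using assms(4) unfolding kepler_motion_def by blast
  obtain v3 where sAB: "sA < sB" and D3: "\<forall>t\<in>{sA..sB}. q3 t \<noteq> 0 \<and> (q3 has_vector_derivative v3 t) (at t within {sA..sB}) \<and>
        (v3 has_vector_derivative (- (q3 t / of_real ((norm (q3 t)) ^ 3)))) (at t within {sA..sB})"
    using assms(7) unfolding kepler_motion_def by blast
  obtain \<sigma> where sc: "continuous_on {sA..sB} \<sigma>" and sm: "strict_mono_on {sA..sB} \<sigma>"
    and si: "\<sigma> ` {sA..sB} = {tA..tB}" and sq: "\<forall>s\<in>{sA..sB}. q3 s = kepler_g phi M N (q1 (\<sigma> s))"
    using assms(8) unfolding is_image_arc_def by blast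
  have sT: "\<sigma> s \<in> {tA..tB}" if "s \<in> {sA..sB}" for s using si that by blast
  have sA_: "\<sigma> sA = tA"
  proof -
    obtain s' where s': "s' \<in> {sA..sB}" "\<sigma> s' = tA" using si tAB by (metis atLeastAtMost_iff imageE order_less_imp_le order_refl)
    show ?thesis
    proof (rule ccontr)
      assume "\<sigma> sA \<noteq> tA"
      then have "s' \<noteq> sA" using s' by auto
      then have "sA < s'" using s' by auto
      then have "\<sigma> sA < \<sigma> s'" using sm s' sAB by (auto simp: strict_mono_on_def)
      moreover have "\<sigma> sA \<ge> tA" using sT[of sA] sAB by auto
      ultimately show False using s' by auto
    qed
  qed
  have sB_: "\<sigma> sB = tB"
  proof -
    obtain s' where s': "s' \<in> {sA..sB}" "\<sigma> s' = tB" using si tAB by (metis atLeastAtMost_iff imageE order_less_imp_le order_refl)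
    show ?thesis
    proof (rule ccontr)
      assume "\<sigma> sB \<noteq> tB"
      then have "s' \<noteq> sB" using s' by auto
      then have "s' < sB" using s' by auto
      then have "\<sigma> s' < \<sigma> sB" using sm s' sAB by (auto simp: strict_mono_on_def)
      moreover have "\<sigma> sB \<le> tB" using sT[of sB] sAB by auto
      ultimately show False using s' by auto
    qed
  qed
  define C1 where "C1 t = Re (q1 t) * Im (v1 t) - Im (q1 t) * Re (v1 t)" for t
  have conic1: "\<forall>t\<in>{tA..tB}. norm (q1 t) = 0 * Re (q1 t) + M * Im (q1 t) + N"
    using assms(5) by (simp add: on_branch_def)
  have C1sq: "(C1 t)^2 = N" if "t \<in> {tA..tB}" for t
    using kepler_C2[OF tAB D1 conic1 that] by (simp add: C1_def)
  have C1c: "C1 t = C1 tA" if "t \<in> {tA..tB}" for t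
    using kepler_C_const[OF D1 that] by (simp add: C1_def)
  have A1: "Re (q1 t) * Re (v1 t) + Im (q1 t) * Im (v1 t) = norm (q1 t) * (M * Im (v1 t))" if "t \<in> {tA..tB}" for t
    using kepler_A[OF tAB D1 conic1 that] by simp
  have conic3: "\<forall>s\<in>{sA..sB}. norm (q3 s) = cos phi * Re (q3 s) + (M * sin phi) * Im (q3 s) + N * (sin phi)^2"
  proof
    fix s assume s: "s \<in> {sA..sB}"
    have "norm (q1 (\<sigma> s)) = M * Im (q1 (\<sigma> s)) + N" using assms(5) sT[OF s] by (simp add: on_branch_def)
    from g_norm[OF this, of phi] show "norm (q3 s) = cos phi * Re (q3 s) + (M * sin phi) * Im (q3 s) + N * (sin phi)^2"
      using sq s by simp
  qed
  have C3sq: "(Re (q3 s) * Im (v3 s) - Im (q3 s) * Re (v3 s))^2 = N * (sin phi)^2" if "s \<in> {sA..sB}" for s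
    using kepler_C2[OF sAB D3 conic3 that] .
  have sn: "sin phi > 0" using assms(1,2) by (rule sin_gt_zero)
  have cl: "\<bar>cos phi\<bar> < 1"
  proof -
    have "(cos phi)^2 = 1 - (sin phi)^2" by (simp add: cos_squared_eq)
    also have "... < 1" using sn by simp
    finally have "(cos phi)^2 < 1^2" by simp
    thus ?thesis using abs_square_less_1[of "cos phi"] by simp
  qed
  define k where "k = N * cos phi / C1 tA"
  have key: "\<forall>s\<in>{sA..sB}. ((\<lambda>s. \<sigma> s + k * Im (q1 (\<sigma> s)) - s) has_real_derivative 0) (at s within {sA..sB})"
  proof
    fix s0 assume s0: "s0 \<in> {sA..sB}"
    define \<tau> where "\<tau> = \<sigma> s0"
    have \<tau>T: "\<tau> \<in> {tA..tB}" using sT[OF s0] by (simp add: \<tau>_def)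
    define V where "V = v1 \<tau>"
    define P where "P = q1 \<tau>"
    define w where "w = v3 s0"
    define c where "c = cos phi"
    define sn where "sn = sin phi"
    have snp: "sn > 0" using sn by (simp add: sn_def)
    have C1ne: "C1 \<tau> \<noteq> 0" using C1sq[OF \<tau>T] assms(3) by auto
    have C1t: "C1 \<tau> = Re P * Im V - Im P * Re V" by (simp add: C1_def P_def V_def)
    have DFp: "Re V * Re V + Im V * Im V > 0"
    proof -
      have "V \<noteq> 0" using C1ne C1t by auto
      then have "Re V \<noteq> 0 \<or> Im V \<noteq> 0" by (simp add: complex_eq_iff)
      then show ?thesis by (smt (verit) not_real_square_gt_zero zero_le_square)
    qed
    define F where "F t = Re V * Re (q1 t) + Im V * Im (q1 t)" for t
    define G where "G s = Re V * (Re (q3 s) - M * c * Im (q3 s) / sn - N * c) + Im V * (Im (q3 s) / sn)" for s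
    define Gd where "Gd = Re V * (Re w - M * c * Im w / sn) + Im V * (Im w / sn)"
    have dq1: "(q1 has_vector_derivative V) (at \<tau> within {tA..tB})" using D1 \<tau>T by (simp add: V_def)
    have dq3: "(q3 has_vector_derivative w) (at s0 within {sA..sB})" using D3 s0 by (simp add: w_def)
    have dF: "(F has_real_derivative Re V * Re V + Im V * Im V) (at (\<sigma> s0) within {tA..tB})"
      unfolding F_def \<tau>_def[symmetric] using dq1 by (auto intro!: derivative_eq_intros)
    have dG: "(G has_real_derivative Gd) (at s0 within {sA..sB})"
      unfolding G_def Gd_def using dq3 snp by (auto intro!: derivative_eq_intros simp: algebra_simps)
    have GF: "\<forall>s\<in>{sA..sB}. G s = F (\<sigma> s)"
    proof
      fix s assume s: "s \<in> {sA..sB}"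
      have "Re (q3 s) - M * c * Im (q3 s) / sn - N * c = Re (q1 (\<sigma> s))"
        "Im (q3 s) / sn = Im (q1 (\<sigma> s))"
        using sq s snp by (simp_all add: kepler_g_def c_def sn_def)
      then show "G s = F (\<sigma> s)" by (simp add: G_def F_def)
    qed
    define sd where "sd = Gd / (Re V * Re V + Im V * Im V)"
    have dsig: "(\<sigma> has_real_derivative sd) (at s0 within {sA..sB})"
      unfolding sd_def by (rule sigma_deriv[OF sc sm si s0 dF _ dG GF]) (use DFp in linarith)
    have sdnn: "sd \<ge> 0" by (rule mono_deriv_nonneg[OF sAB s0 sm dsig])
    have chain: "((q1 \<circ> \<sigma>) has_vector_derivative sd *\<^sub>R V) (at s0 within {sA..sB})"
      apply (rule vector_diff_chain_within)
      using dsig apply (simp add: has_real_derivative_iff_has_vector_derivative)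
      using dq1 si by (simp add: \<tau>_def)
    have dIm: "((\<lambda>s. Im (q1 (\<sigma> s))) has_real_derivative sd * Im V) (at s0 within {sA..sB})"
      using has_field_derivative_Im[OF chain] by (simp add: o_def)
    have dRe: "((\<lambda>s. Re (q1 (\<sigma> s))) has_real_derivative sd * Re V) (at s0 within {sA..sB})"
      using has_field_derivative_Re[OF chain] by (simp add: o_def)
    have dIm3: "((\<lambda>s. Im (q3 s) / sn) has_real_derivative Im w / sn) (at s0 within {sA..sB})"
      using dq3 snp by (auto intro!: derivative_eq_intros)
    have dRe3: "((\<lambda>s. Re (q3 s) - M * c * Im (q3 s) / sn - N * c) has_real_derivative Re w - M * c * Im w / sn) (at s0 within {sA..sB})"
      using dq3 snp by (auto intro!: derivative_eq_intros)
    have eqIm: "sd * Im V = Im w / sn"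
      by (rule deriv_unique_Icc[OF sAB s0 dIm dIm3]) (use sq snp in \<open>simp add: kepler_g_def sn_def\<close>)
    have eqRe: "sd * Re V = Re w - M * c * Im w / sn"
      by (rule deriv_unique_Icc[OF sAB s0 dRe dRe3]) (use sq snp in \<open>simp add: kepler_g_def sn_def c_def\<close>)
    have Imw: "Im w = sn * sd * Im V" using eqIm snp by (simp add: field_simps)
    have Rew: "Re w = sd * Re V + M * c * sd * Im V" using eqRe Imw snp by (simp add: field_simps)
    have q3s0: "Re (q3 s0) = Re P + M * c * Im P + N * c" "Im (q3 s0) = sn * Im P"
      using sq s0 by (simp_all add: kepler_g_def P_def \<tau>_def c_def sn_def)
    define r where "r = norm P"
    have rP: "r = M * Im P + N" using assms(5) \<tau>T by (simp add: on_branch_def r_def P_def)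
    have rpos: "r > 0" using D1 \<tau>T by (auto simp: r_def P_def)
    have r2: "r^2 = (Re P)^2 + (Im P)^2" by (simp add: r_def cmod_power2)
    have A1': "Re P * Re V + Im P * Im V = r * (M * Im V)" using A1[OF \<tau>T] by (simp add: P_def V_def r_def)
    have VyrN: "Im V * r * N = Re P * C1 \<tau>"
    proof -
      have "Re P * C1 \<tau> = (Re P)^2 * Im V + Im P * (Im P * Im V) - Im P * (Re P * Re V + Im P * Im V)"
        unfolding C1t by (simp add: algebra_simps power2_eq_square)
      also have "... = Im V * ((Re P)^2 + (Im P)^2) - Im P * (r * (M * Im V))"
        unfolding A1' by (simp add: algebra_simps power2_eq_square)
      also have "... = Im V * r * (r - M * Im P)" unfolding r2[symmetric] by (simp add: algebra_simps power2_eq_square)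
      also have "... = Im V * r * N" using rP by simp
      finally show ?thesis by simp
    qed
    have C3e: "Re (q3 s0) * Im w - Im (q3 s0) * Re w = sn * sd * (C1 \<tau> + N * c * Im V)"
      unfolding q3s0 Imw Rew C1t by (simp add: algebra_simps)
    have NcV: "N * c * Im V = c * Re P * C1 \<tau> / r" using VyrN rpos by (simp add: field_simps)
    define Q where "Q = sd * (1 + c * Re P / r)"
    have C3e2: "Re (q3 s0) * Im w - Im (q3 s0) * Re w = sn * C1 \<tau> * Q"
      unfolding C3e NcV Q_def using rpos by (simp add: field_simps)
    have "(sn * C1 \<tau> * Q)^2 = N * sn^2"
      using C3sq[OF s0] C3e2 by (simp add: w_def sn_def)
    hence "sn^2 * (C1 \<tau>)^2 * Q^2 = N * sn^2" by (simp add: power_mult_distrib)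
    hence "sn^2 * N * Q^2 = N * sn^2" using C1sq[OF \<tau>T] by simp
    hence Q2: "Q^2 = 1" using snp assms(3) by simp
    have Qnn: "Q \<ge> 0"
    proof -
      have "\<bar>c * Re P\<bar> \<le> r"
      proof -
        have "\<bar>c * Re P\<bar> \<le> \<bar>Re P\<bar>" using cl by (simp add: abs_mult c_def mult_left_le_one_le)
        also have "... \<le> r" unfolding r_def by (rule abs_Re_le_cmod)
        finally show ?thesis .
      qed
      then have "0 \<le> 1 + c * Re P / r" using rpos by (simp add: field_simps abs_le_iff)
      then show ?thesis unfolding Q_def using sdnn by simp
    qed
    have Q1: "Q = 1" using Q2 Qnn by (smt (verit) power2_eq_1_iff)
    have kV: "k * Im V = c * Re P / r"
    proof -
      have "k * Im V = N * c * Im V / C1 \<tau>" using C1c[OF \<tau>T] by (simp add: k_def c_def)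
      also have "... = c * Re P / r" unfolding NcV using C1ne by simp
      finally show ?thesis .
    qed
    have "((\<lambda>s. \<sigma> s + k * Im (q1 (\<sigma> s)) - s) has_real_derivative sd + k * (sd * Im V) - 1) (at s0 within {sA..sB})"
      by (rule DERIV_diff[OF DERIV_add[OF dsig DERIV_cmult[OF dIm]] DERIV_ident])
    moreover have "sd + k * (sd * Im V) - 1 = 0"
    proof -
      have "sd + k * (sd * Im V) - 1 = sd * (1 + k * Im V) - 1" by (simp add: algebra_simps)
      also have "... = Q - 1" unfolding kV Q_def ..
      finally show ?thesis using Q1 by simp
    qed
    ultimately show "((\<lambda>s. \<sigma> s + k * Im (q1 (\<sigma> s)) - s) has_real_derivative 0) (at s0 within {sA..sB})"
      by simp
  qed
  have "(\<lambda>s. \<sigma> s + k * Im (q1 (\<sigma> s)) - s) sB = (\<lambda>s. \<sigma> s + k * Im (q1 (\<sigma> s)) - s) sA"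
    by (rule const_on[OF key]) (use sAB in auto)
  then show ?thesis using sA_ sB_ assms(6) by simp
qed

end
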